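(* For every positive integer $r$ there is a ReLU network $f_s^r:\mathbb{R}\to\mathbb{R}$ all of whose weights lie in $\{\frac12,-\frac12\}$ such that: (i) $f_s^r(0)=0$; (ii) $\sup_{x\in[0,1]}|f_s^r(x)-x^2|\le 2^{-2(r+1)}$; (iii) its depth is $\mathcal{O}(r)$; (iv) its width is bounded by a constant independent of $r$; (v) its number of weights is $\mathcal{O}(r)$.
   Context: A ReLU network is a feedforward network with activation $\sigma(x)=\max(0,x)$ in which each unit connects only to units in the next layer; depth is the number of layers and width the maximum number of units in a layer. *)

theory Defs
  imports Complex_Main
begin

text \<open>A layer is a pair (W, b): W is a list of rows (one per unit of the layer,
  each row holding the weights of the incoming connections from the previous
  layer), b is the list of biases. A zero entry means "no connection".
  A network is a list of layers (affine maps); the ReLU is applied after every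
  layer except the last one.\<close>

type_synonym layer = "real list list \<times> real list"
type_synonym relu_net = "layer list"

definition relu :: "real \<Rightarrow> real" where
  "relu x = max 0 x"

definition affine :: "layer \<Rightarrow> real list \<Rightarrow> real list" where
  "affine L x = map2 (\<lambda>row bi. (\<Sum>(w, v)\<leftarrow>zip row x. w * v) + bi) (fst L) (snd L)"

fun realize :: "relu_net \<Rightarrow> real list \<Rightarrow> real list" where
  "realize [] x = x"
| "realize [L] x = affine L x"
| "realize (L # Ls) x = realize Ls (map relu (affine L x))"

fun wf_layers :: "nat \<Rightarrow> relu_net \<Rightarrow> bool" where
  "wf_layers d [] = (d = 1)"
| "wf_layers d (L # Ls) =
     (length (fst L) = length (snd L) \<and> length (fst L) \<ge> 1 \<and>
      (\<forall>row\<in>set (fst L). length row = d) \<and> wf_layers (length (snd L)) Ls)"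

definition wf_net :: "relu_net \<Rightarrow> bool" where
  "wf_net N \<longleftrightarrow> N \<noteq> [] \<and> wf_layers 1 N"

definition net_fun :: "relu_net \<Rightarrow> real \<Rightarrow> real" where
  "net_fun N t = hd (realize N [t])"

definition depth :: "relu_net \<Rightarrow> nat" where
  "depth N = length N"

definition width :: "relu_net \<Rightarrow> nat" where
  "width N = Max (insert 1 (set (map (\<lambda>L. length (snd L)) N)))"

definition params :: "relu_net \<Rightarrow> real list" where
  "params N = concat (map (\<lambda>L. concat (fst L) @ snd L) N)"

definition num_weights :: "relu_net \<Rightarrow> nat" where
  "num_weights N = length (filter (\<lambda>w. w \<noteq> 0) (params N))"

definition weights_half :: "relu_net \<Rightarrow> bool" where
  "weights_half N \<longleftrightarrow> (\<forall>w\<in>set (params N). w \<noteq> 0 \<longrightarrow> w \<in> {1/2, -1/2})"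

end

theory Submission
  imports Defs
begin

lemma relu_id: "x \<ge> 0 \<Longrightarrow> relu x = x" by (simp add: relu_def)
lemma relu_0: "x \<le> 0 \<Longrightarrow> relu x = 0" by (simp add: relu_def)

lemma realize_cons: "Ls \<noteq> [] \<Longrightarrow> realize (L # Ls) x = realize Ls (map relu (affine L x))"
  by (cases Ls) auto

definition st :: "real \<Rightarrow> real \<Rightarrow> real \<Rightarrow> real list" where
  "st u A d = [u,u,A,A,d,d]"

definition L0 :: layer where "L0 = ([[1/2],[1/2],[1/2],[1/2]], [0,0,0,0])"
definition L1 :: layer where "L1 = ([[1/2,1/2,1/2,1/2],[1/2,1/2,1/2,1/2],[1/2,1/2,1/2,1/2],
   [1/2,1/2,1/2,1/2],[0,0,0,0],[0,0,0,0]], [0,0,0,0,1/2,1/2])"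
definition S1 :: layer where "S1 = ([[1/2,1/2,0,0,-1/2,-1/2],[1/2,1/2,0,0,-1/2,-1/2],
   [1/2,0,0,0,0,0],[1/2,0,0,0,0,0],[0,0,1/2,1/2,0,0],[0,0,1/2,1/2,0,0],
   [0,0,0,0,1/2,0],[0,0,0,0,1/2,0]], [0,0,0,0,0,0,0,0])"
definition S2 :: layer where "S2 = ([[-1/2,-1/2,1/2,1/2,0,0,0,0],[-1/2,-1/2,1/2,1/2,0,0,0,0],
   [1/2,1/2,-1/2,-1/2,1/2,1/2,0,0],[1/2,1/2,-1/2,-1/2,1/2,1/2,0,0],
   [0,0,0,0,0,0,1/2,0],[0,0,0,0,0,0,1/2,0]], [0,0,0,0,0,0])"
definition Lout :: layer where "Lout = ([[0,0,1/2,1/2,0,0]], [0])"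

fun stepnet :: "nat \<Rightarrow> relu_net" where
  "stepnet 0 = []"
| "stepnet (Suc n) = S1 # S2 # stepnet n"

definition stp :: "real \<times> real \<times> real \<Rightarrow> real \<times> real \<times> real" where
  "stp s = (case s of (u, A, d) \<Rightarrow>
     (relu (relu (u/2) - relu (u - d)), relu (relu A - relu (u/2) + relu (u - d)), relu (relu (d/2) / 2)))"

lemma S1_aff: "affine S1 (st u A d) = [u - d, u - d, u/2, u/2, A, A, d/2, d/2]"
  by (simp add: S1_def st_def affine_def)

lemma S2_aff: "affine S2 [a,a,c,c,f,f,k,l] = [c - a, c - a, a - c + f, a - c + f, k/2, k/2]"
  by (simp add: S2_def affine_def)

lemma step_compute:
  "map relu (affine S2 (map relu (affine S1 (st u A d)))) =
   (case stp (u, A, d) of (u', A', d') \<Rightarrow> st u' A' d')"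
  by (simp only: S1_aff list.map S2_aff) (simp add: st_def stp_def algebra_simps)

lemma out_compute: "affine Lout (st u A d) = [A]"
  by (simp add: Lout_def st_def affine_def)

lemma stepnet_realize:
  "realize (stepnet n @ [Lout]) (st u A d) = [fst (snd ((stp ^^ n) (u, A, d)))]"
proof (induction n arbitrary: u A d)
  case 0 then show ?case by (simp add: out_compute)
next
  case (Suc n)
  obtain u' A' d' where e: "stp (u, A, d) = (u', A', d')" by (cases "stp (u, A, d)") auto
  have "realize (stepnet (Suc n) @ [Lout]) (st u A d)
      = realize (stepnet n @ [Lout]) (map relu (affine S2 (map relu (affine S1 (st u A d)))))"
    by (simp add: realize_cons)
  also have "\<dots> = realize (stepnet n @ [Lout]) (st u' A' d')" using step_compute e by simp
  also have "\<dots> = [fst (snd ((stp ^^ n) (u', A', d')))]" by (rule Suc.IH)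
  finally show ?case using e by (simp add: funpow_Suc_right del: funpow.simps)
qed

definition NN :: "nat \<Rightarrow> relu_net" where
  "NN r = L0 # L1 # (stepnet r @ [Lout])"

lemma init_compute: "x \<ge> 0 \<Longrightarrow> map relu (affine L1 (map relu (affine L0 [x]))) = st x x (1/2)"
  by (simp add: L0_def L1_def affine_def st_def relu_id)

lemma NN_fun: "x \<ge> 0 \<Longrightarrow> net_fun (NN r) x = fst (snd ((stp ^^ r) (x, x, 1/2)))"
  by (simp add: net_fun_def NN_def realize_cons init_compute stepnet_realize)

definition g :: "real \<Rightarrow> real" where "g y = (if y \<le> 1/2 then 2*y else 2 - 2*y)"
definition G :: "nat \<Rightarrow> real \<Rightarrow> real" where "G n x = (g ^^ n) x"
definition F :: "nat \<Rightarrow> real \<Rightarrow> real" where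
  "F m x = x - (\<Sum>k<m. G (Suc k) x / 4 ^ Suc k)"

lemma g_range: "0 \<le> y \<Longrightarrow> y \<le> 1 \<Longrightarrow> 0 \<le> g y \<and> g y \<le> 1"
  by (simp add: g_def)

lemma G_range: "0 \<le> x \<Longrightarrow> x \<le> 1 \<Longrightarrow> 0 \<le> G n x \<and> G n x \<le> 1"
  by (induction n) (auto simp: G_def g_def)

lemma G_zero: "G n 0 = 0"
  by (induction n) (auto simp: G_def g_def)

lemma F_Suc: "F (Suc m) x = x - g x / 2 + F m (g x) / 4"
proof -
  have G1: "\<And>k. G (Suc k) x = G k (g x)" by (simp add: G_def funpow_Suc_right del: funpow.simps)
  have "(\<Sum>k<Suc m. G (Suc k) x / 4 ^ Suc k) = G 1 x / 4 + (\<Sum>k<m. G (Suc (Suc k)) x / 4 ^ Suc (Suc k))"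
    by (subst sum.lessThan_Suc_shift) simp
  also have "\<dots> = g x / 4 + (\<Sum>k<m. G (Suc k) (g x) / 4 ^ Suc k) / 4"
    by (simp add: G1 sum_divide_distrib G_def funpow_swap1)
  finally have S: "(\<Sum>k<Suc m. G (Suc k) x / 4 ^ Suc k) = g x / 4 + (\<Sum>k<m. G (Suc k) (g x) / 4 ^ Suc k) / 4" .
  show ?thesis by (simp only: F_def S) (simp add: field_simps)
qed

lemma F_err: "0 \<le> x \<Longrightarrow> x \<le> 1 \<Longrightarrow> 0 \<le> F m x - x^2 \<and> F m x - x^2 \<le> 1 / 4 ^ Suc m"
proof (induction m arbitrary: x)
  case 0
  have e: "(x - 1/2)^2 = x^2 - x + 1/4" by (simp add: power2_eq_square algebra_simps)
  have "0 \<le> (x - 1/2)^2" by simp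
  then have "x - x^2 \<le> 1/4" using e by linarith
  moreover have "0 \<le> x - x^2" using 0 by (simp add: power2_eq_square mult_left_le)
  ultimately show ?case by (simp add: F_def)
next
  case (Suc m)
  have key: "F (Suc m) x - x^2 = (F m (g x) - (g x)^2) / 4"
    by (simp add: F_Suc g_def power2_eq_square field_simps)
  from Suc.IH[of "g x"] g_range[OF Suc.prems] show ?case by (simp add: key)
qed

lemma stp_iter:
  assumes "0 \<le> x" "x \<le> 1"
  shows "(stp ^^ n) (x, x, 1/2) = (G n x / 4 ^ n, F n x, 1 / (2 * 4 ^ n))"
proof (induction n)
  case 0 then show ?case by (simp add: G_def F_def)
next
  case (Suc n)
  define y where "y = G n x"
  have y: "0 \<le> y" "y \<le> 1" using G_range[OF assms] y_def by auto
  have p: "(0::real) < 4 ^ n" by simp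
  have h: "relu (y / 4 ^ n / 2) = y / 4 ^ n / 2" using y p by (intro relu_id) simp
  have w: "relu (y / 4 ^ n - 1 / (2 * 4 ^ n)) = relu (y - 1/2) / 4 ^ n"
    using p by (cases "y \<le> 1/2") (auto simp: relu_def field_simps)
  have gy: "y / 4 ^ n / 2 - relu (y - 1/2) / 4 ^ n = g y / 4 ^ Suc n"
    using y p by (auto simp: relu_def g_def field_simps)
  have gnn: "0 \<le> g y / 4 ^ Suc n" using g_range[OF y] by simp
  have GS: "G (Suc n) x = g y" by (simp add: G_def y_def)
  have FA: "relu (F n x) = F n x" using F_err[OF assms, of n]
    by (intro relu_id) (use zero_le_power2[of x] in linarith)
  have FS: "F (Suc n) x = F n x - g y / 4 ^ Suc n" by (simp add: F_def GS)
  have FSnn: "0 \<le> F (Suc n) x" using F_err[OF assms, of "Suc n"]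
    using zero_le_power2[of x] by linarith
  have d: "relu (relu (1 / (2 * 4 ^ n) / 2) / 2) = 1 / (2 * 4 ^ Suc n)"
    using p by (simp add: relu_id)
  have A: "relu (F n x - y / 4 ^ n / 2 + relu (y - 1/2) / 4 ^ n) = F (Suc n) x"
  proof -
    have "F n x - y / 4 ^ n / 2 + relu (y - 1/2) / 4 ^ n = F (Suc n) x"
      using FS gy by simp
    then show ?thesis using FSnn relu_id by simp
  qed
  have "(stp ^^ Suc n) (x, x, 1/2) = stp (y / 4 ^ n, F n x, 1 / (2 * 4 ^ n))"
    using Suc.IH by (simp add: y_def)
  also have "\<dots> = (g y / 4 ^ Suc n, F (Suc n) x, 1 / (2 * 4 ^ Suc n))"
    unfolding stp_def by (simp only: prod.case h w gy FA A d relu_id[OF gnn])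
  finally show ?case by (simp only: GS)
qed

lemma wf_step: "wf_layers 6 (stepnet n @ [Lout])"
  by (induction n) (simp_all add: S1_def S2_def Lout_def eval_nat_numeral)

lemma wf_NN: "wf_net (NN r)"
  using wf_step[of r] by (simp add: wf_net_def NN_def L0_def L1_def eval_nat_numeral)

lemma params_Cons: "params (L # Ls) = concat (fst L) @ snd L @ params Ls"
  by (simp add: params_def)
lemma params_app: "params (xs @ ys) = params xs @ params ys"
  by (simp add: params_def)

lemma params_step_set: "set (params (stepnet n @ [Lout])) \<subseteq> {0, 1/2, -1/2}"
  by (induction n) (auto simp: params_Cons params_app S1_def S2_def Lout_def params_def)

lemma params_step_len: "length (params (stepnet n @ [Lout])) = 110 * n + 7"
  by (induction n) (auto simp: params_Cons params_app S1_def S2_def Lout_def params_def)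

lemma weights_NN: "weights_half (NN r)"
proof -
  have "set (params (NN r)) \<subseteq> {0, 1/2, -1/2}"
    using params_step_set[of r] by (auto simp: NN_def params_Cons L0_def L1_def)
  then show ?thesis unfolding weights_half_def by auto
qed

lemma num_NN: "num_weights (NN r) \<le> 110 * r + 45"
proof -
  have "num_weights (NN r) \<le> length (params (NN r))"
    unfolding num_weights_def by (rule length_filter_le)
  also have "\<dots> = 110 * r + 45"
    using params_step_len[of r] by (simp add: NN_def params_Cons L0_def L1_def)
  finally show ?thesis .
qed

lemma width_step: "set (map (\<lambda>L. length (snd L)) (stepnet n @ [Lout])) \<subseteq> {1, 6, 8}"
  by (induction n) (auto simp: S1_def S2_def Lout_def)

lemma width_NN: "width (NN r) \<le> 8"
proof -
  have "set (map (\<lambda>L. length (snd L)) (NN r)) \<subseteq> {1, 4, 6, 8}"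
    using width_step[of r] by (auto simp: NN_def L0_def L1_def)
  then have "insert 1 (set (map (\<lambda>L. length (snd L)) (NN r))) \<subseteq> {1, 4, 6, 8}" by auto
  then show ?thesis unfolding width_def by (subst Max_le_iff) auto
qed

lemma depth_NN: "depth (NN r) = 2 * r + 3"
proof -
  have "length (stepnet r) = 2 * r" by (induction r) auto
  then show ?thesis by (simp add: depth_def NN_def)
qed

lemma F_zero: "F m 0 = 0"
  by (simp add: F_def G_zero)

theorem proposition1:
  shows "\<exists>C_depth C_width C_weights :: real.
     \<forall>r::nat. r \<ge> 1 \<longrightarrow>
       (\<exists>N. wf_net N \<and> weights_half N \<and>
            net_fun N 0 = 0 \<and>
            (\<forall>x\<in>{0..1::real}. \<bar>net_fun N x - x ^ 2\<bar> \<le> 1 / 2 ^ (2 * (r + 1))) \<and>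
            real (depth N) \<le> C_depth * real r \<and>
            real (width N) \<le> C_width \<and>
            real (num_weights N) \<le> C_weights * real r)"
proof (rule exI[of _ 5], rule exI[of _ 8], rule exI[of _ 155], intro allI impI)
  fix r :: nat assume r: "r \<ge> 1"
  have val: "net_fun (NN r) x = F r x" if "0 \<le> x" "x \<le> 1" for x
    using NN_fun[of x r] stp_iter[OF that, of r] that by simp
  have err: "\<bar>net_fun (NN r) x - x ^ 2\<bar> \<le> 1 / 2 ^ (2 * (r + 1))" if "x \<in> {0..1::real}" for x
  proof -
    have x: "0 \<le> x" "x \<le> 1" using that by auto
    have e: "(2::real) ^ (2 * (r + 1)) = 4 ^ Suc r" by (simp add: power_mult)
    show ?thesis using F_err[OF x, of r] val[OF x] e by simp
  qed
  have z: "net_fun (NN r) 0 = 0" using val[of 0] F_zero by simp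
  have d: "real (depth (NN r)) \<le> 5 * real r" using r by (simp add: depth_NN)
  have w: "real (width (NN r)) \<le> 8" using width_NN[of r] by simp
  have n: "real (num_weights (NN r)) \<le> 155 * real r"
  proof -
    have "num_weights (NN r) \<le> 155 * r" using num_NN[of r] r by linarith
    then show ?thesis by (metis of_nat_le_iff of_nat_mult of_nat_numeral)
  qed
  show "\<exists>N. wf_net N \<and> weights_half N \<and> net_fun N 0 = 0 \<and>
          (\<forall>x\<in>{0..1::real}. \<bar>net_fun N x - x ^ 2\<bar> \<le> 1 / 2 ^ (2 * (r + 1))) \<and>
          real (depth N) \<le> 5 * real r \<and> real (width N) \<le> 8 \<and>
          real (num_weights N) \<le> 155 * real r"
    using wf_NN weights_NN z err d w n by blast
qed

end
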